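(* For each $\lambda\in\mathbb N$ and $n\in\mathbb N$ there exists a nonzero $p_{0,\lambda}\in\mathcal S((\mathbb T,\mathbb R)_x)$ such that each $p_{0,\lambda}^{(-j;\lambda)}$, $1\le j\le n$, is well-defined and belongs to $\mathcal S((\mathbb T,\mathbb R)_x)$, and $$\|(p_{0,\lambda},p_{0,\lambda}^{(-1;\lambda)},\dots,p_{0,\lambda}^{(-n;\lambda)})\|_{H^m_x}\lesssim_{m,n}\|p_{0,\lambda}\|_{L^2}\quad\text{for every }m\in\mathbb N_0,$$ with implicit constant independent of $\lambda$, and with one of the following properties: either $p_{0,\lambda},\dots,p^{(-n;\lambda)}_{0,\lambda}$ are all supported in $(-1,1)$; or their Fourier transforms $\mathcal F[p_{0,\lambda}],\dots,\mathcal F[p^{(-n;\lambda)}_{0,\lambda}]$ are all supported in $(-1,1)$.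
   Context: Here $(\mathbb T,\mathbb R)_x$ denotes either $\mathbb T_x=\mathbb R/2\pi\mathbb Z$ or $\mathbb R_x$. Define the right inverse $\partial_x^{-1}$ of $\partial_x$ by $\partial_x^{-1}g(x)=\int_0^xg(x')dx'+\int_0^{2\pi}x'g(x')dx'$ on $\mathbb T_x$ (defined when $\int g\,dx=0$) and $\partial_x^{-1}g(x)=\int_{-\infty}^xg(x')dx'$ on $\mathbb R_x$. For a function $g$ for which these are defined, set $g^{(-1;\lambda)}=i\lambda e^{-i\lambda x}\partial_x^{-1}(e^{i\lambda x}g)$ and inductively $g^{(-j-1;\lambda)}=i\lambda e^{-i\lambda x}\partial_x^{-1}(e^{i\lambda x}g^{(-j;\lambda)})$. *)

theory Defs
  imports "HOL-Analysis.Analysis"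
begin

definition vderiv :: "nat \<Rightarrow> (real \<Rightarrow> complex) \<Rightarrow> real \<Rightarrow> complex" where
  "vderiv k f = ((\<lambda>g x. vector_derivative g (at x)) ^^ k) f"

definition smooth_fun :: "(real \<Rightarrow> complex) \<Rightarrow> bool" where
  "smooth_fun f \<longleftrightarrow> (\<forall>k x. (vderiv k f has_vector_derivative vderiv (Suc k) f x) (at x))"

definition schwartz_R :: "(real \<Rightarrow> complex) \<Rightarrow> bool" where
  "schwartz_R f \<longleftrightarrow> smooth_fun f \<and>
     (\<forall>a k. bounded (range (\<lambda>x. complex_of_real (x ^ a) * vderiv k f x)))"

definition periodic_2pi :: "(real \<Rightarrow> complex) \<Rightarrow> bool" where
  "periodic_2pi f \<longleftrightarrow> (\<forall>x. f (x + 2 * pi) = f x)"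

definition schwartz_T :: "(real \<Rightarrow> complex) \<Rightarrow> bool" where
  "schwartz_T f \<longleftrightarrow> periodic_2pi f \<and> smooth_fun f"

definition L2_R :: "(real \<Rightarrow> complex) \<Rightarrow> real" where
  "L2_R f = sqrt (integral UNIV (\<lambda>x. (cmod (f x))\<^sup>2))"

definition L2_T :: "(real \<Rightarrow> complex) \<Rightarrow> real" where
  "L2_T f = sqrt (integral {0..2*pi} (\<lambda>x. (cmod (f x))\<^sup>2))"

text \<open>Sobolev H^m norms (derivative form, equivalent to the Fourier form up to constants depending on m).\<close>
definition Hm_R :: "nat \<Rightarrow> (real \<Rightarrow> complex) \<Rightarrow> real" where
  "Hm_R m f = sqrt (\<Sum>k\<le>m. integral UNIV (\<lambda>x. (cmod (vderiv k f x))\<^sup>2))"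

definition Hm_T :: "nat \<Rightarrow> (real \<Rightarrow> complex) \<Rightarrow> real" where
  "Hm_T m f = sqrt (\<Sum>k\<le>m. integral {0..2*pi} (\<lambda>x. (cmod (vderiv k f x))\<^sup>2))"

definition fourier_R :: "(real \<Rightarrow> complex) \<Rightarrow> real \<Rightarrow> complex" where
  "fourier_R f \<xi> = integral UNIV (\<lambda>x. exp (- \<i> * complex_of_real (x * \<xi>)) * f x)"

definition fourier_T :: "(real \<Rightarrow> complex) \<Rightarrow> int \<Rightarrow> complex" where
  "fourier_T f k = integral {0..2*pi} (\<lambda>x. exp (- \<i> * complex_of_real (real_of_int k * x)) * f x)
                    / complex_of_real (2 * pi)"

definition int0 :: "(real \<Rightarrow> complex) \<Rightarrow> real \<Rightarrow> complex" where
  "int0 g x = (if 0 \<le> x then integral {0..x} g else - integral {x..0} g)"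

definition inv_dx_T :: "(real \<Rightarrow> complex) \<Rightarrow> real \<Rightarrow> complex" where
  "inv_dx_T g x = int0 g x + integral {0..2*pi} (\<lambda>x'. complex_of_real x' * g x')"

definition inv_dx_T_defined :: "(real \<Rightarrow> complex) \<Rightarrow> bool" where
  "inv_dx_T_defined g \<longleftrightarrow> g integrable_on {0..2*pi} \<and>
     (\<lambda>x'. complex_of_real x' * g x') integrable_on {0..2*pi} \<and>
     integral {0..2*pi} g = 0"

definition inv_dx_R :: "(real \<Rightarrow> complex) \<Rightarrow> real \<Rightarrow> complex" where
  "inv_dx_R g x = integral {..x} g"

definition inv_dx_R_defined :: "(real \<Rightarrow> complex) \<Rightarrow> bool" where
  "inv_dx_R_defined g \<longleftrightarrow> (\<forall>x. g integrable_on {..x})"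

definition emod :: "nat \<Rightarrow> real \<Rightarrow> complex" where
  "emod l x = exp (\<i> * complex_of_real (real l * x))"

text \<open>g^(-1;lambda) = i lambda e^{-i lambda x} dx^{-1}(e^{i lambda x} g)\<close>
definition step_T :: "nat \<Rightarrow> (real \<Rightarrow> complex) \<Rightarrow> real \<Rightarrow> complex" where
  "step_T l g x = \<i> * of_nat l * exp (- \<i> * complex_of_real (real l * x)) *
                   inv_dx_T (\<lambda>x'. emod l x' * g x') x"

definition step_R :: "nat \<Rightarrow> (real \<Rightarrow> complex) \<Rightarrow> real \<Rightarrow> complex" where
  "step_R l g x = \<i> * of_nat l * exp (- \<i> * complex_of_real (real l * x)) *
                   inv_dx_R (\<lambda>x'. emod l x' * g x') x"

definition iter_T :: "nat \<Rightarrow> nat \<Rightarrow> (real \<Rightarrow> complex) \<Rightarrow> real \<Rightarrow> complex" where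
  "iter_T l j g = (step_T l ^^ j) g"

definition iter_R :: "nat \<Rightarrow> nat \<Rightarrow> (real \<Rightarrow> complex) \<Rightarrow> real \<Rightarrow> complex" where
  "iter_R l j g = (step_R l ^^ j) g"

definition iter_T_defined :: "nat \<Rightarrow> nat \<Rightarrow> (real \<Rightarrow> complex) \<Rightarrow> bool" where
  "iter_T_defined l n g \<longleftrightarrow> (\<forall>j<n. inv_dx_T_defined (\<lambda>x. emod l x * iter_T l j g x))"

definition iter_R_defined :: "nat \<Rightarrow> nat \<Rightarrow> (real \<Rightarrow> complex) \<Rightarrow> bool" where
  "iter_R_defined l n g \<longleftrightarrow> (\<forall>j<n. inv_dx_R_defined (\<lambda>x. emod l x * iter_R l j g x))"

definition supp_in_R :: "(real \<Rightarrow> complex) \<Rightarrow> bool" where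
  "supp_in_R f \<longleftrightarrow> closure {x. f x \<noteq> 0} \<subseteq> {-1<..<1}"

text \<open>Support on T inside (the image of) (-1,1): for periodic f, the closed support lies in the
  periodised copies of (-1,1).\<close>
definition supp_in_T :: "(real \<Rightarrow> complex) \<Rightarrow> bool" where
  "supp_in_T f \<longleftrightarrow> closure {x. f x \<noteq> 0} \<subseteq> (\<Union>k::int. {2*pi*k - 1<..<2*pi*k + 1})"

definition fsupp_in_R :: "(real \<Rightarrow> complex) \<Rightarrow> bool" where
  "fsupp_in_R f \<longleftrightarrow> closure {\<xi>. fourier_R f \<xi> \<noteq> 0} \<subseteq> {-1<..<1}"

definition fsupp_in_T :: "(real \<Rightarrow> complex) \<Rightarrow> bool" where
  "fsupp_in_T f \<longleftrightarrow> (\<forall>k. fourier_T f k \<noteq> 0 \<longrightarrow> -1 < k \<and> k < 1)"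

end

theory Submission
  imports Defs "HOL-Computational_Algebra.Polynomial"
begin


fun Ck :: "nat \<Rightarrow> (real \<Rightarrow> real) \<Rightarrow> bool" where
  "Ck 0 f = continuous_on UNIV f"
| "Ck (Suc k) f = ((\<forall>x. f differentiable (at x)) \<and> Ck k (deriv f))"

lemma diff_DERIV: "f differentiable (at x) \<Longrightarrow> (f has_real_derivative deriv f x) (at x)"
  by (simp add: DERIV_deriv_iff_real_differentiable)

lemma Ck_mono: "Ck (Suc k) f \<Longrightarrow> Ck k f"
proof (induction k arbitrary: f)
  case 0
  then show ?case
    by (auto intro!: differentiable_imp_continuous_within continuous_at_imp_continuous_on)
next
  case (Suc k)
  then show ?case by auto
qed

lemma Ck_mono_le: "Ck k f \<Longrightarrow> m \<le> k \<Longrightarrow> Ck m f"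
proof (induction k)
  case 0 then show ?case by simp
next
  case (Suc k)
  show ?case
  proof (cases "m = Suc k")
    case True then show ?thesis using Suc by simp
  next
    case False then show ?thesis using Suc Ck_mono[of k f] by simp
  qed
qed

lemma Ck_const: "Ck k (\<lambda>x. c)"
proof (induction k arbitrary: c)
  case 0 then show ?case by simp
next
  case (Suc k)
  have "deriv (\<lambda>x. c) = (\<lambda>x. 0)" by (rule ext) simp
  then show ?case using Suc by simp
qed

lemma Ck_id: "Ck k (\<lambda>x. x)"
proof (cases k)
  case 0 then show ?thesis by (simp add: continuous_on_id)
next
  case (Suc m)
  have "deriv (\<lambda>x. x) = (\<lambda>x. 1)" by (rule ext) simp
  then show ?thesis using Suc Ck_const by simp
qed

lemma Ck_add: "Ck k f \<Longrightarrow> Ck k g \<Longrightarrow> Ck k (\<lambda>x. f x + g x)"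
proof (induction k arbitrary: f g)
  case 0 then show ?case by (auto intro: continuous_intros)
next
  case (Suc k)
  have d: "deriv (\<lambda>x. f x + g x) = (\<lambda>x. deriv f x + deriv g x)"
    using Suc.prems by (intro ext DERIV_imp_deriv) (auto intro!: derivative_eq_intros diff_DERIV)
  show ?case using Suc by (auto simp: d)
qed

lemma Ck_mult: "Ck k f \<Longrightarrow> Ck k g \<Longrightarrow> Ck k (\<lambda>x. f x * g x)"
proof (induction k arbitrary: f g)
  case 0 then show ?case by (auto intro: continuous_intros)
next
  case (Suc k)
  have d: "deriv (\<lambda>x. f x * g x) = (\<lambda>x. deriv f x * g x + f x * deriv g x)"
    using Suc.prems by (intro ext DERIV_imp_deriv) (auto intro!: derivative_eq_intros diff_DERIV)
  have "Ck k f" "Ck k g" using Suc.prems Ck_mono by blast+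
  then show ?case using Suc by (auto simp: d intro!: Suc.IH Ck_add)
qed

lemma Ck_inverse: "Ck k g \<Longrightarrow> (\<forall>x. g x \<noteq> 0) \<Longrightarrow> Ck k (\<lambda>x. 1 / g x)"
proof (induction k arbitrary: g)
  case 0 then show ?case by (auto intro!: continuous_intros)
next
  case (Suc k)
  have d: "deriv (\<lambda>x. 1 / g x) = (\<lambda>x. (- deriv g x) * ((1 / g x) * (1 / g x)))"
    using Suc.prems by (intro ext DERIV_imp_deriv) (auto intro!: derivative_eq_intros diff_DERIV simp: power2_eq_square field_simps)
  have "Ck k g" using Suc.prems Ck_mono by blast
  then have i: "Ck k (\<lambda>x. 1 / g x)" using Suc by blast
  have "Ck k (\<lambda>x. - deriv g x)"
    using Ck_mult[OF Ck_const[of k "-1"], of "deriv g"] Suc.prems by simp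
  moreover have "\<forall>x. (\<lambda>x. 1 / g x) differentiable (at x)"
    using Suc.prems by (auto intro!: derivative_intros)
  ultimately have "Ck k (\<lambda>x. (- deriv g x) * ((1 / g x) * (1 / g x)))"
    using i by (intro Ck_mult)
  then show ?case using Suc.prems \<open>\<forall>x. (\<lambda>x. 1 / g x) differentiable (at x)\<close>
    by (simp only: Ck.simps d) simp
qed

lemma Ck_comp: "Ck k F \<Longrightarrow> Ck k g \<Longrightarrow> Ck k (\<lambda>x. F (g x))"
proof (induction k arbitrary: F g)
  case 0 then show ?case
    by (auto intro: continuous_on_compose2[of UNIV F UNIV g])
next
  case (Suc k)
  have d: "deriv (\<lambda>x. F (g x)) = (\<lambda>x. deriv F (g x) * deriv g x)"
    using Suc.prems by (intro ext DERIV_imp_deriv) (auto intro!: DERIV_chain2[OF diff_DERIV diff_DERIV])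
  have "Ck k F" "Ck k g" using Suc.prems Ck_mono by blast+
  have "Ck k (\<lambda>x. deriv F (g x))" using Suc \<open>Ck k g\<close> by auto
  moreover have "\<forall>x. (\<lambda>x. F (g x)) differentiable (at x)"
  proof
    fix x
    have "((\<lambda>x. F (g x)) has_real_derivative deriv F (g x) * deriv g x) (at x)"
      using Suc.prems by (intro DERIV_chain2[OF diff_DERIV diff_DERIV]) auto
    then show "(\<lambda>x. F (g x)) differentiable (at x)" using real_differentiable_def by blast
  qed
  ultimately show ?case using Suc.prems by (auto simp: d intro!: Ck_mult)
qed

lemma Ck_sin_cos: "Ck k sin \<and> Ck k cos"
proof (induction k)
  case 0 then show ?case by (auto intro: continuous_intros)
next
  case (Suc k)
  have "deriv sin = (cos::real\<Rightarrow>real)" "deriv cos = (\<lambda>x::real. - sin x)"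
    by (auto intro!: ext DERIV_imp_deriv derivative_eq_intros)
  moreover have "Ck k (\<lambda>x. - sin x)"
    using Ck_mult[OF Ck_const[of k "-1"], of sin] Suc by simp
  moreover have "\<forall>x::real. sin differentiable (at x)"
    using DERIV_sin real_differentiable_def by blast
  moreover have "\<forall>x::real. cos differentiable (at x)"
    using DERIV_cos real_differentiable_def by blast
  ultimately show ?case using Suc by simp
qed


lemma alg1: "(f::real) = (1/x)^2 * (b - a) * e \<Longrightarrow> a * (- 1 / x^2) * e + e * (1/x^2) * b = f"
  by (simp add: power_divide diff_divide_distrib algebra_simps)

definition fE :: "real poly \<Rightarrow> real \<Rightarrow> real" where
  "fE P t = (if t > 0 then poly P (1/t) * exp (-1/t) else 0)"

definition dP :: "real poly \<Rightarrow> real poly" where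
  "dP P = [:0,0,1:] * (P - pderiv P)"

lemma lim_poly_exp: "((\<lambda>u. u * poly P u / exp u) \<longlongrightarrow> (0::real)) at_top"
proof -
  have e: "(\<lambda>u. u * poly P u / exp u) = (\<lambda>u. \<Sum>i\<le>degree P. coeff P i * (u ^ Suc i / exp u))"
    by (rule ext) (simp add: poly_altdef sum_distrib_left sum_divide_distrib field_simps)
  have "((\<lambda>u. \<Sum>i\<le>degree P. coeff P i * (u ^ Suc i / exp u)) \<longlongrightarrow> (\<Sum>i\<le>degree P. coeff P i * 0)) at_top"
    by (intro tendsto_sum tendsto_mult tendsto_const tendsto_power_div_exp_0)
  then show ?thesis unfolding e by simp
qed

lemma fE_deriv0: "(fE P has_real_derivative 0) (at 0)"
proof -
  have r: "((\<lambda>h. (fE P h - fE P 0) / h) \<longlongrightarrow> 0) (at_right 0)"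
  proof -
    have "((\<lambda>h. inverse h * poly P (inverse h) / exp (inverse h)) \<longlongrightarrow> (0::real)) (at_right 0)"
      using filterlim_compose[OF lim_poly_exp filterlim_inverse_at_top_right] by simp
    moreover have "\<forall>\<^sub>F h in at_right 0. inverse h * poly P (inverse h) / exp (inverse h) = (fE P h - fE P 0) / h"
    proof (rule eventually_mono[OF eventually_at_right_less[of 0]])
      fix h :: real assume h: "0 < h"
      have "(fE P h - fE P 0) / h = poly P (inverse h) * inverse (exp (inverse h)) / h"
        using h by (simp add: fE_def exp_minus inverse_eq_divide)
      also have "\<dots> = inverse h * poly P (inverse h) / exp (inverse h)"
        by (simp add: divide_inverse)
      finally show "inverse h * poly P (inverse h) / exp (inverse h) = (fE P h - fE P 0) / h" by simp
    qed
    ultimately show ?thesis by (rule Lim_transform_eventually)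
  qed
  have l: "((\<lambda>h. (fE P h - fE P 0) / h) \<longlongrightarrow> 0) (at_left 0)"
  proof -
    have "\<forall>\<^sub>F h in at_left 0. 0 = (fE P h - fE P 0) / h"
      by (auto simp: fE_def intro!: eventually_mono[OF eventually_at_left_real[of "-1" 0]])
    then show ?thesis by (rule Lim_transform_eventually[OF tendsto_const])
  qed
  show ?thesis unfolding has_field_derivative_iff
    using filterlim_split_at[OF l r] by simp
qed

lemma fE_deriv: "(fE P has_real_derivative fE (dP P) x) (at x)"
proof -
  consider "x > 0" | "x < 0" | "x = 0" by linarith
  then show ?thesis
  proof cases
    case 1
    have d: "((\<lambda>t. poly P (1/t) * exp (-1/t)) has_real_derivative fE (dP P) x) (at x)"
    proof -
      have i: "((\<lambda>t. 1/t) has_real_derivative (- 1 / x^2)) (at x)"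
        using 1 DERIV_inverse[of x] by (simp add: inverse_eq_divide power2_eq_square)
      have i2: "((\<lambda>t. -1/t) has_real_derivative (1 / x^2)) (at x)"
        using DERIV_minus[OF i] by simp
      have a: "((\<lambda>t. poly P (1/t)) has_real_derivative poly (pderiv P) (1/x) * (- 1 / x^2)) (at x)"
        by (rule DERIV_chain2[OF poly_DERIV i])
      have b: "((\<lambda>t. exp (-1/t)) has_real_derivative exp (-1/x) * (1/x^2)) (at x)"
        by (rule DERIV_chain2[OF DERIV_exp i2])
      have "((\<lambda>t. poly P (1/t) * exp (-1/t)) has_real_derivative
         poly (pderiv P) (1/x) * (- 1 / x^2) * exp (-1/x) + exp (-1/x) * (1/x^2) * poly P (1/x)) (at x)"
        by (rule DERIV_mult[OF a b])
      moreover have "poly (pderiv P) (1/x) * (- 1 / x^2) * exp (-1/x) + exp (-1/x) * (1/x^2) * poly P (1/x) = fE (dP P) x"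
      proof -
        have pe: "poly (dP P) u = u^2 * (poly P u - poly (pderiv P) u)" for u
          by (simp add: dP_def power2_eq_square algebra_simps)
        have "fE (dP P) x = (1/x)^2 * (poly P (1/x) - poly (pderiv P) (1/x)) * exp (-1/x)"
          using 1 by (simp add: fE_def pe)
        then show ?thesis by (rule alg1)
      
      qed
      ultimately show ?thesis by simp
    qed
    show ?thesis
      by (rule has_field_derivative_transform_within_open[OF d, of "{0<..}"]) (use 1 in \<open>auto simp: fE_def\<close>)
  next
    case 2
    have "((\<lambda>t. 0) has_real_derivative fE (dP P) x) (at x)" using 2 by (simp add: fE_def)
    then show ?thesis
      by (rule has_field_derivative_transform_within_open[where S="{..<0}"]) (use 2 in \<open>auto simp: fE_def\<close>)
  next
    case 3 then show ?thesis using fE_deriv0 by (simp add: fE_def)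
  qed
qed

lemma fE_deriv_eq: "deriv (fE P) = fE (dP P)"
  by (rule ext) (rule DERIV_imp_deriv[OF fE_deriv])

lemma Ck_fE: "Ck k (fE P)"
proof (induction k arbitrary: P)
  case 0
  show ?case
  proof -
    have "\<forall>x\<in>UNIV. isCont (fE P) x" using DERIV_isCont[OF fE_deriv] by blast
    then show ?thesis by (simp add: continuous_at_imp_continuous_on)
  qed
next
  case (Suc k)
  have "\<forall>x. fE P differentiable (at x)" using fE_deriv real_differentiable_def by blast
  then show ?case using Suc by (simp add: fE_deriv_eq)
qed

definition f0 :: "real \<Rightarrow> real" where "f0 = fE [:1:]"

lemma f0_pos: "t > 0 \<Longrightarrow> f0 t > 0" and f0_zero: "t \<le> 0 \<Longrightarrow> f0 t = 0"
  by (auto simp: f0_def fE_def)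

definition Fst :: "real \<Rightarrow> real \<Rightarrow> real \<Rightarrow> real" where
  "Fst a b t = f0 (t - a) / (f0 (t - a) + f0 (b - t))"

lemma Ck_affine: "Ck k (\<lambda>x. c * x + d)"
  by (intro Ck_add Ck_mult Ck_const Ck_id)

lemma Ck_Fst: assumes "a < b" shows "Ck k (Fst a b)"
proof -
  have p: "f0 (t - a) + f0 (b - t) \<noteq> 0" for t
  proof (cases "t > a")
    case True then show ?thesis using f0_pos[of "t-a"] f0_zero[of "b-t"] f0_pos[of "b-t"]
      by (cases "b - t > 0") auto
  next
    case False then show ?thesis using f0_zero[of "t-a"] f0_pos[of "b-t"] assms by auto
  qed
  have c1: "Ck k (\<lambda>t. f0 (t - a))"
    using Ck_comp[OF Ck_fE Ck_affine[of k 1 "-a"]] by (simp add: f0_def)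
  have c2: "Ck k (\<lambda>t. f0 (b - t))"
    using Ck_comp[OF Ck_fE Ck_affine[of k "-1" "b"]] by (simp add: f0_def)
  have "Ck k (\<lambda>t. f0 (t - a) * (1 / (f0 (t - a) + f0 (b - t))))"
    by (intro Ck_mult c1 Ck_inverse Ck_add c2) (use p in auto)
  then show ?thesis unfolding Fst_def[abs_def] by simp
qed

lemma Fst_0: "t \<le> a \<Longrightarrow> Fst a b t = 0"
  by (simp add: Fst_def f0_zero)

lemma Fst_1: "a < b \<Longrightarrow> t \<ge> b \<Longrightarrow> Fst a b t = 1"
  using f0_pos[of "t - a"] by (simp add: Fst_def f0_zero)


lemma Ck_funpow: "Ck (m + k) f \<Longrightarrow> Ck m ((deriv ^^ k) f)"
proof (induction k arbitrary: f)
  case 0 then show ?case by simp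
next
  case (Suc k)
  have "Ck (m + k) (deriv f)" using Suc.prems by simp
  then show ?case using Suc.IH by (simp add: funpow_Suc_right del: funpow.simps)
qed

lemma smooth_deriv:
  assumes "\<And>k. Ck k s"
  shows "((deriv ^^ k) s has_real_derivative (deriv ^^ Suc k) s x) (at x)"
proof -
  have "Ck 1 ((deriv ^^ k) s)" using Ck_funpow[of 1 k s] assms by simp
  then have "(deriv ^^ k) s differentiable (at x)" by simp
  then show ?thesis using diff_DERIV by simp
qed

lemma const_open_derivs:
  fixes s :: "real \<Rightarrow> real" and c :: real
  assumes "open U" "\<And>y. y \<in> U \<Longrightarrow> s y = c" "x \<in> U"
  shows "(deriv ^^ k) s x = (if k = 0 then c else 0)"
proof -
  have "\<forall>x\<in>U. (deriv ^^ k) s x = (if k = 0 then c else 0)"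
  proof (induction k)
    case 0 then show ?case using assms by simp
  next
    case (Suc k)
    show ?case
    proof
      fix x assume x: "x \<in> U"
      have "((\<lambda>y. if k = 0 then c else 0) has_real_derivative 0) (at x)" by simp
      then have "((deriv ^^ k) s has_real_derivative 0) (at x)"
        by (rule has_field_derivative_transform_within_open[where S=U]) (use assms x Suc in auto)
      then show "(deriv ^^ Suc k) s x = (if Suc k = 0 then c else 0)"
        using DERIV_imp_deriv by simp
    qed
  qed
  then show ?thesis using assms by blast
qed

fun B :: "real \<Rightarrow> (nat \<Rightarrow> real \<Rightarrow> real) \<Rightarrow> nat \<Rightarrow> nat \<Rightarrow> real \<Rightarrow> complex" where
  "B L S 0 k x = of_real (S k x)"
| "B L S (Suc M) k x = B L S M (Suc k) x / of_real L + \<i> * B L S M k x"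

lemma B_deriv:
  assumes "\<And>k x. (S k has_real_derivative S (Suc k) x) (at x)"
  shows "(B L S M k has_vector_derivative B L S M (Suc k) x) (at x)"
proof (induction M arbitrary: k x)
  case 0
  show ?case using has_vector_derivative_of_real[OF assms[of k x]]
    by (simp add: fun_eq_iff)
next
  case (Suc M)
  have e: "B L S (Suc M) k = (\<lambda>x. B L S M (Suc k) x / of_real L + \<i> * B L S M k x)"
    by (rule ext) simp
  show ?case unfolding e
    by (auto intro!: derivative_eq_intros Suc.IH)
qed

fun beta :: "(nat \<Rightarrow> real) \<Rightarrow> nat \<Rightarrow> nat \<Rightarrow> real" where
  "beta b 0 k = b k"
| "beta b (Suc M) k = beta b M (Suc k) + beta b M k"

lemma B_bound:
  assumes "\<And>k x. \<bar>S k x\<bar> \<le> b k" "L \<ge> 1"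
  shows "cmod (B L S M k x) \<le> beta b M k"
proof (induction M arbitrary: k)
  case 0 then show ?case using assms by simp
next
  case (Suc M)
  have "cmod (B L S M (Suc k) x / of_real L) \<le> cmod (B L S M (Suc k) x)"
    using assms(2) mult_left_mono[OF assms(2) norm_ge_zero[of "B L S M (Suc k) x"]]
    by (simp add: norm_divide divide_le_eq)
  then have "cmod (B L S (Suc M) k x) \<le> cmod (B L S M (Suc k) x) + cmod (B L S M k x)"
    using norm_triangle_ineq[of "B L S M (Suc k) x / of_real L" "\<i> * B L S M k x"]
    by (simp add: norm_mult)
  then show ?case using Suc[of "Suc k"] Suc[of k] by simp
qed

lemma B_zero:
  assumes "\<And>k. S k x = 0"
  shows "B L S M k x = 0"
  using assms by (induction M arbitrary: k) auto

lemma B_plateau: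
  assumes "\<And>k. S k x = (if k = 0 then 1 else 0)"
  shows "B L S M k x = (if k = 0 then \<i> ^ M else 0)"
  using assms by (induction M arbitrary: k) auto

lemma vderiv_seq:
  assumes "\<And>k x. (D k has_vector_derivative D (Suc k) x) (at x)"
  shows "vderiv k (D 0) = D k"
proof (induction k)
  case 0 then show ?case by (simp add: vderiv_def)
next
  case (Suc k)
  have "vderiv (Suc k) (D 0) = (\<lambda>x. vector_derivative (vderiv k (D 0)) (at x))"
    by (simp add: vderiv_def)
  also have "\<dots> = (\<lambda>x. vector_derivative (D k) (at x))" by (simp only: Suc.IH)
  also have "\<dots> = D (Suc k)" by (rule ext, rule vector_derivative_at, rule assms)
  finally show ?case .
qed

lemma smooth_seq:
  assumes "\<And>k x. (D k has_vector_derivative D (Suc k) x) (at x)"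
  shows "smooth_fun (D 0)"
proof -
  have v: "vderiv j (D 0) = D j" for j by (rule vderiv_seq[of D], rule assms)
  show ?thesis unfolding smooth_fun_def v by (intro allI assms)
qed

lemma cB_deriv:
  assumes "\<And>k x. (S k has_real_derivative S (Suc k) x) (at x)"
  shows "((\<lambda>x. c * B L S M k x) has_vector_derivative c * B L S M (Suc k) x) (at x)"
  using B_deriv[of S, OF assms] by (auto intro!: derivative_eq_intros)

lemma cB_vderiv:
  assumes "\<And>k x. (S k has_real_derivative S (Suc k) x) (at x)"
  shows "vderiv k (\<lambda>x. c * B L S M 0 x) = (\<lambda>x. c * B L S M k x)"
  using vderiv_seq[of "\<lambda>k x. c * B L S M k x" k] cB_deriv[of S, OF assms] by simp

lemma cB_smooth:
  assumes "\<And>k x. (S k has_real_derivative S (Suc k) x) (at x)"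
  shows "smooth_fun (\<lambda>x. c * B L S M 0 x)"
  using smooth_seq[of "\<lambda>k x. c * B L S M k x"] cB_deriv[of S, OF assms] by simp

lemma B_cont:
  assumes "\<And>k x. (S k has_real_derivative S (Suc k) x) (at x)"
  shows "continuous_on A (B L S M k)"
  using B_deriv[of S, OF assms] has_vector_derivative_continuous
  by (meson continuous_at_imp_continuous_on)


lemma emod_eq: "emod l = (\<lambda>x. exp (\<i> * of_nat l * of_real x))"
  by (rule ext) (simp add: emod_def mult.assoc)

lemma emod_deriv: "(emod l has_vector_derivative \<i> * of_nat l * emod l x) (at x)"
proof -
  have "((\<lambda>z. exp (\<i> * of_nat l * z)) has_field_derivative exp (\<i> * of_nat l * of_real x) * (\<i> * of_nat l)) (at (of_real x))"
    by (auto intro!: derivative_eq_intros)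
  from has_vector_derivative_real_field[OF this]
  show ?thesis unfolding emod_eq by (simp add: mult.commute)
qed

lemma emod_inv: "exp (- \<i> * complex_of_real (real l * x)) * emod l x = 1"
  by (simp add: emod_def exp_minus[symmetric] flip: exp_add)

lemma H_deriv:
  assumes S: "\<And>k x. (S k has_real_derivative S (Suc k) x) (at x)" and l: "l \<ge> 1"
  shows "((\<lambda>y. emod l y * B (real l) S M 0 y) has_vector_derivative
           of_nat l * (emod l x * B (real l) S (Suc M) 0 x)) (at x)"
proof -
  have "((\<lambda>y. emod l y * B (real l) S M 0 y) has_vector_derivative
           emod l x * B (real l) S M (Suc 0) x + \<i> * of_nat l * emod l x * B (real l) S M 0 x) (at x)"
    using has_vector_derivative_mult[OF emod_deriv B_deriv[of S, OF S]] by simp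
  moreover have "emod l x * B (real l) S M (Suc 0) x + \<i> * of_nat l * emod l x * B (real l) S M 0 x
      = of_nat l * (emod l x * B (real l) S (Suc M) 0 x)"
    using l by (simp add: field_simps)
  ultimately show ?thesis by simp
qed

lemma stepR_int:
  assumes S: "\<And>k x. (S k has_real_derivative S (Suc k) x) (at x)" and l: "l \<ge> 1"
    and z: "\<And>k y. y \<le> -1 \<Longrightarrow> S k y = 0"
  shows "((\<lambda>y. emod l y * (c * B (real l) S (Suc M) 0 y)) has_integral
            (c / of_nat l) * (emod l x * B (real l) S M 0 x)) {..x}"
proof -
  define g where "g = (\<lambda>y. emod l y * (c * B (real l) S (Suc M) 0 y))"
  define F where "F = (\<lambda>y. (c / of_nat l) * (emod l y * B (real l) S M 0 y))"
  have dF: "(F has_vector_derivative g y) (at y)" for y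
  proof -
    have "(F has_vector_derivative (c / of_nat l) * (of_nat l * (emod l y * B (real l) S (Suc M) 0 y))) (at y)"
      unfolding F_def by (rule has_vector_derivative_mult_right[OF H_deriv[of S, OF S l]])
    then show ?thesis using l by (simp add: g_def ac_simps)
  qed
  have Bz: "B (real l) S M' k y = 0" if "y \<le> -1" for y M' k
    by (rule B_zero) (use z that in auto)
  show ?thesis
  proof (cases "x \<ge> -1")
    case True
    have "(g has_integral (F x - F (-1))) {-1..x}"
      by (rule fundamental_theorem_of_calculus[OF True])
         (auto intro: has_vector_derivative_at_within dF)
    then have "(g has_integral F x) {-1..x}" by (simp add: F_def Bz)
    then have "((\<lambda>y. if y \<le> x then g y else 0) has_integral F x) {-1..x}"
      by (rule has_integral_cong[THEN iffD1, rotated]) auto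
    then have "((\<lambda>y. if y \<le> x then g y else 0) has_integral F x) {..x}"
      by (rule has_integral_on_superset) (auto simp: g_def Bz)
    then have "(g has_integral F x) {..x}"
      by (rule has_integral_cong[THEN iffD1, rotated]) auto
    then show ?thesis by (simp add: g_def F_def)
  next
    case False
    have "(g has_integral 0) {..x}"
      by (rule has_integral_is_0) (use False in \<open>auto simp: g_def Bz\<close>)
    then show ?thesis using False by (simp add: g_def Bz)
  qed
qed

lemma stepR_B:
  assumes S: "\<And>k x. (S k has_real_derivative S (Suc k) x) (at x)" and l: "l \<ge> 1"
    and z: "\<And>k y. y \<le> -1 \<Longrightarrow> S k y = 0"
  shows "step_R l (\<lambda>y. c * B (real l) S (Suc M) 0 y) = (\<lambda>y. (\<i> * c) * B (real l) S M 0 y)"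
proof (rule ext)
  fix x
  have "inv_dx_R (\<lambda>y. emod l y * (c * B (real l) S (Suc M) 0 y)) x = (c / of_nat l) * (emod l x * B (real l) S M 0 x)"
    unfolding inv_dx_R_def by (rule integral_unique[OF stepR_int[of S, OF S l z]])
  then show "step_R l (\<lambda>y. c * B (real l) S (Suc M) 0 y) x = (\<i> * c) * B (real l) S M 0 x"
  proof -
    have e: "exp (- \<i> * complex_of_real (real l * x)) * emod l x = 1" by (rule emod_inv)
    have l0: "(of_nat l :: complex) \<noteq> 0" using l by simp
    have "\<i> * of_nat l * exp (- \<i> * complex_of_real (real l * x)) * ((c / of_nat l) * (emod l x * B (real l) S M 0 x))
        = (\<i> * c) * B (real l) S M 0 x * (exp (- \<i> * complex_of_real (real l * x)) * emod l x) * (of_nat l / of_nat l)"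
      by (simp add: field_simps)
    also have "\<dots> = (\<i> * c) * B (real l) S M 0 x" using e l0 by simp
    finally show ?thesis unfolding step_R_def \<open>inv_dx_R _ x = _\<close> .
  qed
qed

lemma int_UNIV_R:
  fixes F :: "real \<Rightarrow> real"
  assumes "continuous_on UNIV F" "\<And>x. \<bar>x\<bar> \<ge> 1/2 \<Longrightarrow> F x = 0"
  shows "(F has_integral integral {-1..1} F) UNIV"
proof -
  have "F integrable_on {-1..1}"
    by (rule integrable_continuous_interval) (rule continuous_on_subset[OF assms(1)], simp)
  then show ?thesis
    by (rule has_integral_on_superset[OF integrable_integral]) (use assms(2) in auto)
qed

lemma int_UNIV_R_le:
  fixes F :: "real \<Rightarrow> real"
  assumes "continuous_on UNIV F" "\<And>x. \<bar>x\<bar> \<ge> 1/2 \<Longrightarrow> F x = 0" "\<And>x. F x \<le> K"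
  shows "integral UNIV F \<le> 2 * K"
proof -
  have "integral UNIV F = integral {-1..1} F" using int_UNIV_R[OF assms(1,2)] by (rule integral_unique)
  also have "\<dots> \<le> integral {-1..1} (\<lambda>x::real. K)"
    by (rule Henstock_Kurzweil_Integration.integral_le) (auto intro!: integrable_continuous_interval continuous_on_subset[OF assms(1)] assms(3))
  also have "\<dots> = 2 * K" by simp
  finally show ?thesis .
qed

context
  fixes S :: "nat \<Rightarrow> real \<Rightarrow> real" and b :: "nat \<Rightarrow> real"
  assumes S: "\<And>k x. (S k has_real_derivative S (Suc k) x) (at x)"
    and z: "\<And>k y. \<bar>y\<bar> \<ge> 1/2 \<Longrightarrow> S k y = 0"
    and bd: "\<And>k y. \<bar>S k y\<bar> \<le> b k"
    and pl: "\<And>k y. \<bar>y\<bar> \<le> 1/5 \<Longrightarrow> S k y = (if k = 0 then 1 else 0)"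
begin

lemma BzR: "\<bar>y\<bar> \<ge> 1/2 \<Longrightarrow> B L S M k y = 0"
  by (rule B_zero) (use z in auto)

lemma fR_schwartz:
  assumes L: "L \<ge> 1"
  shows "schwartz_R (\<lambda>x. c * B L S M 0 x)"
  unfolding schwartz_R_def
proof (intro conjI allI)
  show "smooth_fun (\<lambda>x. c * B L S M 0 x)" by (rule cB_smooth[of S, OF S])
  fix a k
  have "norm (complex_of_real (x ^ a) * vderiv k (\<lambda>x. c * B L S M 0 x) x) \<le> cmod c * beta b M k" for x
  proof (cases "\<bar>x\<bar> \<ge> 1/2")
    case True then show ?thesis using BzR[OF True] cB_vderiv[of S, OF S]
      by (simp add: mult_nonneg_nonneg order_trans[OF norm_ge_zero B_bound[OF bd L]])
  next
    case False
    have "\<bar>x\<bar> ^ a \<le> 1" using False by (simp add: power_le_one)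
    moreover have "cmod (B L S M k x) \<le> beta b M k" by (rule B_bound[OF bd L])
    ultimately have "\<bar>x\<bar> ^ a * (cmod c * cmod (B L S M k x)) \<le> 1 * (cmod c * beta b M k)"
      by (intro mult_mono mult_left_mono) auto
    then show ?thesis using cB_vderiv[of S, OF S] by (simp add: norm_mult norm_power)
  qed
  then show "bounded (range (\<lambda>x. complex_of_real (x ^ a) * vderiv k (\<lambda>x. c * B L S M 0 x) x))"
    unfolding bounded_iff by blast
qed

lemma fR_intsq_le:
  assumes L: "L \<ge> 1"
  shows "integral UNIV (\<lambda>x. (cmod (vderiv k (\<lambda>x. c * B L S M 0 x) x))\<^sup>2) \<le> 2 * (cmod c * beta b M k)\<^sup>2"
proof -
  have e: "vderiv k (\<lambda>x. c * B L S M 0 x) = (\<lambda>x. c * B L S M k x)" by (rule cB_vderiv[of S, OF S])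
  show ?thesis unfolding e
  proof (rule int_UNIV_R_le)
    show "continuous_on UNIV (\<lambda>x. (cmod (c * B L S M k x))\<^sup>2)"
      by (intro continuous_intros B_cont[of S, OF S])
    show "(cmod (c * B L S M k x))\<^sup>2 = 0" if "\<bar>x\<bar> \<ge> 1/2" for x using BzR[OF that] by simp
    show "(cmod (c * B L S M k x))\<^sup>2 \<le> (cmod c * beta b M k)\<^sup>2" for x
      using B_bound[OF bd L, where M=M and k=k and x=x] by (simp add: norm_mult power_mono mult_left_mono)
  qed
qed

lemma fR_Hm:
  assumes L: "L \<ge> 1"
  shows "Hm_R m (\<lambda>x. c * B L S M 0 x) \<le> sqrt (\<Sum>k\<le>m. 2 * (cmod c * beta b M k)\<^sup>2)"
  unfolding Hm_R_def by (intro real_sqrt_le_mono sum_mono fR_intsq_le L)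

lemma fR_supp: "supp_in_R (\<lambda>x. c * B L S M 0 x)"
proof -
  have "{x. c * B L S M 0 x \<noteq> 0} \<subseteq> {-1/2..1/2}"
    using BzR by (force simp: abs_le_iff)
  then have "closure {x. c * B L S M 0 x \<noteq> 0} \<subseteq> {-1/2..1/2}"
    by (rule closure_minimal) simp
  then show ?thesis unfolding supp_in_R_def by auto
qed

lemma pR_L2:
  shows "L2_R (\<lambda>x. B L S M 0 x) \<ge> sqrt (2/5)"
proof -
  define F where "F = (\<lambda>x. (cmod (B L S M 0 x))\<^sup>2)"
  have cF: "continuous_on UNIV F" unfolding F_def by (intro continuous_intros B_cont[of S, OF S])
  have zF: "F x = 0" if "\<bar>x\<bar> \<ge> 1/2" for x using BzR[OF that] by (simp add: F_def)
  have "integral UNIV F = integral {-1..1} F" using int_UNIV_R[OF cF zF] by (rule integral_unique)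
  also have "integral {-1/5..1/5} F \<le> integral {-1..1} F"
    by (rule integral_subset_le) (auto intro!: integrable_continuous_interval continuous_on_subset[OF cF], simp add: F_def)
  moreover have "integral {-1/5..1/5} F = integral {-1/5..1/5::real} (\<lambda>x::real. 1::real)"
  proof (rule integral_cong)
    fix x :: real assume "x \<in> {-1/5..1/5}"
    then have "\<bar>x\<bar> \<le> 1/5" by auto
    then show "F x = 1" unfolding F_def using B_plateau[of S x L M 0] pl by (simp add: norm_power)
  qed
  ultimately have "2/5 \<le> integral UNIV F" by simp
  then show ?thesis unfolding L2_R_def F_def[symmetric] by simp
qed

lemma R_main:
  "\<forall>n::nat. n \<ge> 1 \<longrightarrow> (\<exists>C :: nat \<Rightarrow> real. \<forall>l::nat. l \<ge> 1 \<longrightarrow>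
      (\<exists>p. schwartz_R p \<and> (\<exists>x. p x \<noteq> 0) \<and> iter_R_defined l n p \<and>
           (\<forall>j\<in>{1..n}. schwartz_R (iter_R l j p)) \<and>
           (\<forall>m::nat. (\<Sum>j\<le>n. Hm_R m (iter_R l j p)) \<le> C m * L2_R p) \<and>
           ((\<forall>j\<le>n. supp_in_R (iter_R l j p)) \<or> (\<forall>j\<le>n. fsupp_in_R (iter_R l j p)))))"
proof (intro allI impI)
  fix n :: nat assume "n \<ge> 1"
  define N where "N = Suc n"
  define hb where "hb j m = sqrt (\<Sum>k\<le>m. 2 * (cmod (\<i> ^ j) * beta b (N - j) k)\<^sup>2)" for j m
  define C where "C m = (\<Sum>j\<le>n. hb j m) / sqrt (2/5)" for m
  have zS: "S k y = 0" if "y \<le> -1" for k y using z that by auto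
  show "\<exists>C :: nat \<Rightarrow> real. \<forall>l::nat. l \<ge> 1 \<longrightarrow>
      (\<exists>p. schwartz_R p \<and> (\<exists>x. p x \<noteq> 0) \<and> iter_R_defined l n p \<and>
           (\<forall>j\<in>{1..n}. schwartz_R (iter_R l j p)) \<and>
           (\<forall>m::nat. (\<Sum>j\<le>n. Hm_R m (iter_R l j p)) \<le> C m * L2_R p) \<and>
           ((\<forall>j\<le>n. supp_in_R (iter_R l j p)) \<or> (\<forall>j\<le>n. fsupp_in_R (iter_R l j p))))"
  proof (intro exI[of _ C] allI impI)
    fix l :: nat assume l: "l \<ge> 1"
    have L: "real l \<ge> 1" using l by simp
    define p where "p = (\<lambda>x. B (real l) S N 0 x)"
    have it: "iter_R l j p = (\<lambda>x. \<i> ^ j * B (real l) S (N - j) 0 x)" if "j \<le> n" for j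
      using that
    proof (induction j)
      case 0 then show ?case by (simp add: iter_R_def p_def)
    next
      case (Suc j)
      have NS: "N - j = Suc (N - Suc j)" using Suc.prems by (simp add: N_def)
      have "iter_R l (Suc j) p = step_R l (iter_R l j p)" by (simp add: iter_R_def)
      also have "\<dots> = step_R l (\<lambda>x. \<i> ^ j * B (real l) S (Suc (N - Suc j)) 0 x)"
        using Suc by (simp add: NS)
      also have "\<dots> = (\<lambda>x. (\<i> * \<i> ^ j) * B (real l) S (N - Suc j) 0 x)"
        by (rule stepR_B[of S, OF S l zS])
      finally show ?case by simp
    qed
    have defd: "iter_R_defined l n p"
      unfolding iter_R_defined_def inv_dx_R_defined_def
    proof (intro allI impI)
      fix j x assume j: "j < n"
      have NS: "N - j = Suc (N - Suc j)" using j by (simp add: N_def)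
      show "(\<lambda>x. emod l x * iter_R l j p x) integrable_on {..x}"
        unfolding it[OF less_imp_le[OF j]] NS
        using stepR_int[of S, OF S l zS] by blast
    qed
    have sch: "schwartz_R (iter_R l j p)" if "j \<le> n" for j
      unfolding it[OF that] by (rule fR_schwartz[OF L])
    have supp: "supp_in_R (iter_R l j p)" if "j \<le> n" for j
      unfolding it[OF that] by (rule fR_supp)
    have Hm: "Hm_R m (iter_R l j p) \<le> hb j m" if "j \<le> n" for j m
      unfolding it[OF that] hb_def by (rule fR_Hm[OF L])
    have L2: "L2_R p \<ge> sqrt (2/5)" unfolding p_def by (rule pR_L2)
    have Cnn: "C m \<ge> 0" for m unfolding C_def hb_def by (intro divide_nonneg_pos sum_nonneg real_sqrt_ge_zero) auto
    have bound: "(\<Sum>j\<le>n. Hm_R m (iter_R l j p)) \<le> C m * L2_R p" for m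
    proof -
      have "(\<Sum>j\<le>n. Hm_R m (iter_R l j p)) \<le> (\<Sum>j\<le>n. hb j m)"
        by (intro sum_mono Hm) auto
      also have "\<dots> = C m * sqrt (2/5)" by (simp add: C_def)
      also have "\<dots> \<le> C m * L2_R p" by (intro mult_left_mono L2 Cnn)
      finally show ?thesis .
    qed
    have nz: "p 0 \<noteq> 0"
      unfolding p_def using B_plateau[of S 0 "real l" N 0] pl by simp
    have "schwartz_R p" using sch[of 0] by (simp add: iter_R_def)
    then show "\<exists>p. schwartz_R p \<and> (\<exists>x. p x \<noteq> 0) \<and> iter_R_defined l n p \<and>
           (\<forall>j\<in>{1..n}. schwartz_R (iter_R l j p)) \<and>
           (\<forall>m::nat. (\<Sum>j\<le>n. Hm_R m (iter_R l j p)) \<le> C m * L2_R p) \<and>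
           ((\<forall>j\<le>n. supp_in_R (iter_R l j p)) \<or> (\<forall>j\<le>n. fsupp_in_R (iter_R l j p)))"
      using nz defd sch supp bound by (intro exI[of _ p]) auto
  qed
qed

end


definition sR :: "real \<Rightarrow> real" where "sR x = Fst (9/10) (19/20) (1 - x * x)"

lemma Ck_sR: "Ck k sR"
proof -
  have "Ck k (\<lambda>x. Fst (9/10) (19/20) (1 + (-1) * (x * x)))"
    by (intro Ck_comp[OF Ck_Fst] Ck_add Ck_mult Ck_const Ck_id) simp
  then show ?thesis unfolding sR_def[abs_def] by simp
qed

lemma bounded_derivs:
  assumes S: "\<And>k x. (S k has_real_derivative S (Suc k) x) (at x)"
    and z: "\<And>k y. \<bar>y\<bar> \<ge> 1/2 \<Longrightarrow> S k y = 0"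
  shows "\<exists>b. \<forall>k y. \<bar>S k y\<bar> \<le> b k"
proof -
  have "\<exists>c. \<forall>y. \<bar>S k y\<bar> \<le> c" for k
  proof -
    have "continuous_on {-1..1} (S k)"
      using DERIV_isCont[OF S] by (simp add: continuous_at_imp_continuous_on)
    then have "compact (S k ` {-1..1})" by (rule compact_continuous_image) simp
    then obtain c where c: "\<forall>v\<in>S k ` {-1..1}. norm v \<le> c"
      using compact_imp_bounded bounded_iff by metis
    have "\<bar>S k y\<bar> \<le> c" for y
    proof (cases "\<bar>y\<bar> \<ge> 1/2")
      case True
      have "\<bar>S k 0\<bar> \<le> c" using c by auto
      then show ?thesis using z[OF True] by simp
    next
      case False
      then have "y \<in> {-1..1}" by auto
      then show ?thesis using c by auto
    qed
    then show ?thesis by blast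
  qed
  then show ?thesis by metis
qed

lemma R_part:
  "\<forall>n::nat. n \<ge> 1 \<longrightarrow> (\<exists>C :: nat \<Rightarrow> real. \<forall>l::nat. l \<ge> 1 \<longrightarrow>
      (\<exists>p. schwartz_R p \<and> (\<exists>x. p x \<noteq> 0) \<and> iter_R_defined l n p \<and>
           (\<forall>j\<in>{1..n}. schwartz_R (iter_R l j p)) \<and>
           (\<forall>m::nat. (\<Sum>j\<le>n. Hm_R m (iter_R l j p)) \<le> C m * L2_R p) \<and>
           ((\<forall>j\<le>n. supp_in_R (iter_R l j p)) \<or> (\<forall>j\<le>n. fsupp_in_R (iter_R l j p)))))"
proof -
  define S where "S k = (deriv ^^ k) sR" for k
  have Sd: "(S k has_real_derivative S (Suc k) x) (at x)" for k x
    unfolding S_def by (rule smooth_deriv[OF Ck_sR])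
  have z: "S k y = 0" if "\<bar>y\<bar> \<ge> 1/2" for k y
  proof -
    have "(deriv ^^ k) sR y = (if k = 0 then 0 else 0)"
    proof (rule const_open_derivs[where U="{x. 1 - x * x < 9/10}"])
      show "open {x::real. 1 - x * x < 9/10}"
        by (intro open_Collect_less continuous_intros)
      show "sR x = 0" if "x \<in> {x. 1 - x * x < 9 / 10}" for x
        using that by (simp add: sR_def Fst_0)
      have "y * y \<ge> 1/4"
        using that mult_mono[of "1/2" "\<bar>y\<bar>" "1/2" "\<bar>y\<bar>"] by (simp add: abs_mult[symmetric])
      then show "y \<in> {x. 1 - x * x < 9 / 10}" by simp
    qed
    then show ?thesis by (simp add: S_def)
  qed
  have pl: "S k y = (if k = 0 then 1 else 0)" if "\<bar>y\<bar> \<le> 1/5" for k y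
  proof -
    have "(deriv ^^ k) sR y = (if k = 0 then 1 else 0)"
    proof (rule const_open_derivs[where U="{x. 1 - x * x > 19/20}"])
      show "open {x::real. 1 - x * x > 19/20}"
        by (intro open_Collect_less continuous_intros)
      show "sR x = 1" if "x \<in> {x. 1 - x * x > 19/20}" for x
        using that by (simp add: sR_def Fst_1)
      have "y * y \<le> 1/25"
        using that mult_mono[of "\<bar>y\<bar>" "1/5" "\<bar>y\<bar>" "1/5"] by (simp add: abs_mult[symmetric])
      then show "y \<in> {x. 1 - x * x > 19/20}" by simp
    qed
    then show ?thesis by (simp add: S_def)
  qed
  obtain b where bd: "\<And>k y. \<bar>S k y\<bar> \<le> b k" using bounded_derivs[of S, OF Sd z] by blast
  show ?thesis by (rule R_main[of S b, OF Sd z bd pl])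
qed


lemma B_bound_at:
  assumes "\<And>k. \<bar>S k x\<bar> \<le> b k" "L \<ge> 1"
  shows "cmod (B L S M k x) \<le> beta b M k"
proof (induction M arbitrary: k)
  case 0 then show ?case using assms by simp
next
  case (Suc M)
  have "cmod (B L S M (Suc k) x / of_real L) \<le> cmod (B L S M (Suc k) x)"
    using assms(2) mult_left_mono[OF assms(2) norm_ge_zero[of "B L S M (Suc k) x"]]
    by (simp add: norm_divide divide_le_eq)
  then have "cmod (B L S (Suc M) k x) \<le> cmod (B L S M (Suc k) x) + cmod (B L S M k x)"
    using norm_triangle_ineq[of "B L S M (Suc k) x / of_real L" "\<i> * B L S M k x"]
    by (simp add: norm_mult)
  then show ?case using Suc[of "Suc k"] Suc[of k] by simp
qed

lemma emod_per: "emod l (y + 2 * pi) = emod l y"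
proof -
  have "emod l (y + 2*pi) = exp (\<i> * (of_nat l * of_real y) + \<i> * (of_nat l * (of_real pi * 2)))"
    by (simp add: emod_def algebra_simps)
  also have "\<dots> = exp (\<i> * (of_nat l * of_real y)) * exp (\<i> * (of_nat l * (of_real pi * 2)))"
    by (rule exp_add)
  also have "\<dots> = emod l y" by (simp add: emod_def)
  finally show ?thesis .
qed

lemma B_per:
  assumes "\<And>k x. S k (x + 2 * pi) = S k x"
  shows "B L S M k (x + 2 * pi) = B L S M k x"
  using assms by (induction M arbitrary: k) auto

context
  fixes S :: "nat \<Rightarrow> real \<Rightarrow> real"
  assumes S: "\<And>k x. (S k has_real_derivative S (Suc k) x) (at x)"
    and per: "\<And>k x. S k (x + 2 * pi) = S k x"
    and z0: "\<And>k. S k 0 = 0"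
begin

lemma H_per: "emod l (y + 2 * pi) * B L S M 0 (y + 2 * pi) = emod l y * B L S M 0 y"
  by (simp add: emod_per B_per[of S, OF per])

lemma stepT:
  assumes l: "l \<ge> 1"
  shows "step_T l (\<lambda>y. c * B (real l) S (Suc (Suc M)) 0 y) = (\<lambda>y. (\<i> * c) * B (real l) S (Suc M) 0 y)"
    and "inv_dx_T_defined (\<lambda>y. emod l y * (c * B (real l) S (Suc (Suc M)) 0 y))"
proof -
  define L where "L = real l"
  define H where "H = (\<lambda>y. emod l y * B L S (Suc M) 0 y)"
  define H0 where "H0 = (\<lambda>y. emod l y * B L S M 0 y)"
  define g where "g = (\<lambda>y. emod l y * (c * B L S (Suc (Suc M)) 0 y))"
  have l0: "(of_nat l :: complex) \<noteq> 0" using l by simp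
  have dH: "(H has_vector_derivative of_nat l * (emod l y * B L S (Suc (Suc M)) 0 y)) (at y)" for y
    unfolding H_def L_def by (rule H_deriv[of S, OF S l])
  have dH0: "(H0 has_vector_derivative of_nat l * H y) (at y)" for y
    unfolding H0_def H_def L_def by (rule H_deriv[of S, OF S l])
  have dF: "((\<lambda>y. (c / of_nat l) * H y) has_vector_derivative g y) (at y)" for y
    using has_vector_derivative_mult_right[OF dH[of y], of "c / of_nat l"] l0
    by (simp add: g_def ac_simps)
  have H00: "H 0 = 0" unfolding H_def by (simp add: B_zero z0)
  have H2pi: "H (2 * pi) = 0" using H_per[of l 0 L "Suc M"] H00 by (simp add: H_def)
  have H0per: "H0 (2 * pi) = H0 0" using H_per[of l 0 L M] by (simp add: H0_def)
  have intg: "\<And>a b. a \<le> b \<Longrightarrow> (g has_integral ((c / of_nat l) * H b - (c / of_nat l) * H a)) {a..b}"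
    by (rule fundamental_theorem_of_calculus, assumption, rule has_vector_derivative_at_within, rule dF)
  have g0: "(g has_integral 0) {0..2*pi}" using intg[of 0 "2*pi"] by (simp add: H00 H2pi)
  have intH: "(H has_integral 0) {0..2*pi}"
  proof -
    have "((\<lambda>y. (1 / of_nat l) * (of_nat l * H y)) has_integral ((1 / of_nat l) * H0 (2*pi) - (1 / of_nat l) * H0 0)) {0..2*pi}"
      by (rule fundamental_theorem_of_calculus, simp, rule has_vector_derivative_at_within,
          rule has_vector_derivative_mult_right, rule dH0)
    then show ?thesis using l0 by (simp add: H0per)
  qed
  have xg: "((\<lambda>y. of_real y * g y) has_integral 0) {0..2*pi}"
  proof -
    have d2: "((\<lambda>y. of_real y * ((c / of_nat l) * H y)) has_vector_derivative
              (of_real y * g y + (c / of_nat l) * H y)) (at y)" for y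
      using has_vector_derivative_mult[OF has_vector_derivative_of_real[OF DERIV_ident] dF[of y]]
      by (simp add: ac_simps)
    have "((\<lambda>y. of_real y * g y + (c / of_nat l) * H y) has_integral
        (of_real (2*pi) * ((c / of_nat l) * H (2*pi)) - of_real 0 * ((c / of_nat l) * H 0))) {0..2*pi}"
      by (rule fundamental_theorem_of_calculus, simp, rule has_vector_derivative_at_within, rule d2)
    then have a: "((\<lambda>y. of_real y * g y + (c / of_nat l) * H y) has_integral 0) {0..2*pi}"
      by (simp add: H2pi)
    have b: "((\<lambda>y. (c / of_nat l) * H y) has_integral 0) {0..2*pi}"
      using has_integral_mult_right[OF intH, of "c / of_nat l"] by simp
    show ?thesis using has_integral_diff[OF a b] by simp
  qed
  have int0: "int0 g x = (c / of_nat l) * H x" for x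
  proof (cases "0 \<le> x")
    case True then show ?thesis using intg[OF True] by (simp add: int0_def integral_unique H00)
  next
    case False
    then have "x \<le> 0" by simp
    then show ?thesis using False intg[OF \<open>x \<le> 0\<close>] by (simp add: int0_def integral_unique H00)
  qed
  show "inv_dx_T_defined (\<lambda>y. emod l y * (c * B (real l) S (Suc (Suc M)) 0 y))"
    unfolding inv_dx_T_defined_def using g0 xg integral_unique[OF g0]
    by (auto simp: g_def L_def)
  show "step_T l (\<lambda>y. c * B (real l) S (Suc (Suc M)) 0 y) = (\<lambda>y. (\<i> * c) * B (real l) S (Suc M) 0 y)"
  proof (rule ext)
    fix x
    have iv: "inv_dx_T (\<lambda>y. emod l y * (c * B (real l) S (Suc (Suc M)) 0 y)) x = (c / of_nat l) * (emod l x * B L S (Suc M) 0 x)"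
      using int0[of x] integral_unique[OF xg] unfolding inv_dx_T_def by (simp add: g_def H_def L_def)
    have e: "exp (- \<i> * complex_of_real (real l * x)) * emod l x = 1" by (rule emod_inv)
    have "\<i> * of_nat l * exp (- \<i> * complex_of_real (real l * x)) * ((c / of_nat l) * (emod l x * B L S (Suc M) 0 x))
        = (\<i> * c) * B L S (Suc M) 0 x * (exp (- \<i> * complex_of_real (real l * x)) * emod l x) * (of_nat l / of_nat l)"
      by (simp add: field_simps)
    also have "\<dots> = (\<i> * c) * B L S (Suc M) 0 x" using e l0 by simp
    finally show "step_T l (\<lambda>y. c * B (real l) S (Suc (Suc M)) 0 y) x = (\<i> * c) * B (real l) S (Suc M) 0 x"
      unfolding step_T_def iv L_def .
  qed
qed

end

lemma cos_supp:
  assumes "cos (y - pi/6) \<ge> cos (pi/8)"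
  shows "\<exists>k::int. 2*pi*k - 1 < y \<and> y < 2*pi*k + 1"
proof -
  define w where "w = y - pi/6"
  define k where "k = \<lfloor>(w + pi) / (2*pi)\<rfloor>"
  define v where "v = w - 2*pi*k"
  have k1: "of_int k \<le> (w + pi) / (2*pi)" "(w + pi) / (2*pi) < of_int k + 1"
    unfolding k_def by linarith+
  have v1: "-pi \<le> v" "v < pi"
    using k1 pi_gt_zero unfolding v_def by (simp_all add: field_simps)
  have cv: "cos v = cos w"
  proof -
    have "cos v = cos w * cos ((2 * pi) * of_int k) + sin w * sin ((2 * pi) * of_int k)"
      unfolding v_def by (rule cos_diff)
    also have "\<dots> = cos w" by simp
    finally show ?thesis .
  qed
  have "\<bar>v\<bar> \<le> pi/8"
  proof (rule ccontr)
    assume "\<not> \<bar>v\<bar> \<le> pi/8"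
    then have a: "pi/8 < \<bar>v\<bar>" by simp
    have "cos \<bar>v\<bar> = cos v" by (cases "v \<ge> 0") auto
    moreover have "cos \<bar>v\<bar> < cos (pi/8)"
      using a v1 by (subst cos_mono_less_eq) auto
    ultimately show False using assms cv by (simp add: w_def)
  qed
  then have "2*pi*k - 1 < y \<and> y < 2*pi*k + 1"
  proof -
    have p4: "pi < 16/5" using pi_approx(2) by simp
    have yv: "y = v + pi/6 + 2*pi*k" by (simp add: v_def w_def)
    have "- (pi/8) \<le> v" "v \<le> pi/8" using \<open>\<bar>v\<bar> \<le> pi/8\<close> by (simp_all only: abs_le_iff) linarith+
    then have "2*pi*k - 1 < y" "y < 2*pi*k + 1" using p4 yv pi_gt_zero by linarith+
    then show ?thesis by blast
  qed
  then show ?thesis by blast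
qed

lemma cos_supp0: "cos (0 - pi/6) < cos (pi/8)"
proof -
  have "cos (pi/6) < cos (pi/8)" by (subst cos_mono_less_eq) auto
  then show ?thesis by simp
qed

context
  fixes S :: "nat \<Rightarrow> real \<Rightarrow> real" and b :: "nat \<Rightarrow> real"
  assumes S: "\<And>k x. (S k has_real_derivative S (Suc k) x) (at x)"
    and per: "\<And>k x. S k (x + 2 * pi) = S k x"
    and zc: "\<And>k y. cos (y - pi/6) < cos (pi/8) \<Longrightarrow> S k y = 0"
    and bd: "\<And>k y. y \<in> {0..2*pi} \<Longrightarrow> \<bar>S k y\<bar> \<le> b k"
    and pl: "\<And>k y. \<bar>y - pi/6\<bar> \<le> pi/32 \<Longrightarrow> S k y = (if k = 0 then 1 else 0)"
begin

lemma z0: "S k 0 = 0" using zc cos_supp0 by blast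

lemma fT_schwartz: "schwartz_T (\<lambda>x. c * B L S M 0 x)"
  unfolding schwartz_T_def periodic_2pi_def
  using cB_smooth[of S, OF S] B_per[of S, OF per] by simp

lemma fT_Hm:
  assumes L: "L \<ge> 1"
  shows "Hm_T m (\<lambda>x. c * B L S M 0 x) \<le> sqrt (\<Sum>k\<le>m. 2 * pi * (cmod c * beta b M k)\<^sup>2)"
  unfolding Hm_T_def
proof (intro real_sqrt_le_mono sum_mono)
  fix k
  have e: "vderiv k (\<lambda>x. c * B L S M 0 x) = (\<lambda>x. c * B L S M k x)" by (rule cB_vderiv[of S, OF S])
  have c: "continuous_on {0..2*pi} (\<lambda>x. (cmod (c * B L S M k x))\<^sup>2)"
    by (intro continuous_intros B_cont[of S, OF S])
  have "integral {0..2*pi} (\<lambda>x. (cmod (c * B L S M k x))\<^sup>2) \<le> integral {0..2*pi} (\<lambda>x::real. (cmod c * beta b M k)\<^sup>2)"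
  proof (rule Henstock_Kurzweil_Integration.integral_le)
    show "(\<lambda>x. (cmod (c * B L S M k x))\<^sup>2) integrable_on {0..2*pi}" by (rule integrable_continuous_interval[OF c])
    show "(\<lambda>x::real. (cmod c * beta b M k)\<^sup>2) integrable_on {0..2*pi}"
      by (rule integrable_continuous_interval[OF continuous_on_const])
    fix x :: real assume "x \<in> {0..2*pi}"
    then have "cmod (B L S M k x) \<le> beta b M k" by (intro B_bound_at[of S x b L] bd L)
    then show "(cmod (c * B L S M k x))\<^sup>2 \<le> (cmod c * beta b M k)\<^sup>2"
      by (simp add: norm_mult power_mono mult_left_mono)
  qed
  also have "\<dots> = 2 * pi * (cmod c * beta b M k)\<^sup>2" by simp
  finally show "integral {0..2*pi} (\<lambda>x. (cmod (vderiv k (\<lambda>x. c * B L S M 0 x) x))\<^sup>2) \<le> 2 * pi * (cmod c * beta b M k)\<^sup>2"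
    unfolding e .
qed

lemma fT_supp: "supp_in_T (\<lambda>x. c * B L S M 0 x)"
proof -
  have "{x. c * B L S M 0 x \<noteq> 0} \<subseteq> {y. cos (pi/8) \<le> cos (y - pi/6)}"
  proof
    fix x assume x: "x \<in> {x. c * B L S M 0 x \<noteq> 0}"
    show "x \<in> {y. cos (pi/8) \<le> cos (y - pi/6)}"
    proof (rule ccontr)
      assume "x \<notin> {y. cos (pi/8) \<le> cos (y - pi/6)}"
      then have "cos (x - pi/6) < cos (pi/8)" by simp
      then have "\<And>k. S k x = 0" by (rule zc)
      then have "B L S M 0 x = 0" by (rule B_zero)
      with x show False by simp
    qed
  qed
  then have cl: "closure {x. c * B L S M 0 x \<noteq> 0} \<subseteq> {y. cos (pi/8) \<le> cos (y - pi/6)}"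
    by (rule closure_minimal) (intro closed_Collect_le continuous_intros)
  have "{y. cos (pi/8) \<le> cos (y - pi/6)} \<subseteq> (\<Union>k::int. {2*pi*k - 1<..<2*pi*k + 1})"
  proof
    fix y assume "y \<in> {y. cos (pi/8) \<le> cos (y - pi/6)}"
    then obtain k :: int where "2*pi*k - 1 < y" "y < 2*pi*k + 1" using cos_supp by auto
    then show "y \<in> (\<Union>k::int. {2*pi*k - 1<..<2*pi*k + 1})" by (intro UN_I[of k]) auto
  qed
  then show ?thesis unfolding supp_in_T_def using cl by (rule subset_trans[rotated])
qed

lemma pT_L2: "L2_T (\<lambda>x. B L S M 0 x) \<ge> sqrt (pi/16)"
proof -
  define F where "F = (\<lambda>x. (cmod (B L S M 0 x))\<^sup>2)"
  have cF: "continuous_on UNIV F" unfolding F_def by (intro continuous_intros B_cont[of S, OF S])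
  have sub: "{pi/6 - pi/32..pi/6 + pi/32} \<subseteq> {0..2*pi}" using pi_gt_zero by auto
  have "integral {pi/6 - pi/32..pi/6 + pi/32} F \<le> integral {0..2*pi} F"
    by (rule integral_subset_le[OF sub]) (auto intro!: integrable_continuous_interval continuous_on_subset[OF cF], simp add: F_def)
  moreover have "integral {pi/6 - pi/32..pi/6 + pi/32} F = integral {pi/6 - pi/32..pi/6 + pi/32} (\<lambda>x::real. 1::real)"
  proof (rule integral_cong)
    fix x :: real assume "x \<in> {pi/6 - pi/32..pi/6 + pi/32}"
    then have "pi/6 - pi/32 \<le> x" "x \<le> pi/6 + pi/32" by auto
    then have "\<bar>x - pi/6\<bar> \<le> pi/32" by (simp only: abs_le_iff) (intro conjI; linarith)
    then show "F x = 1" unfolding F_def using B_plateau[of S x L M 0] pl by (simp add: norm_power)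
  qed
  ultimately have "pi/16 \<le> integral {0..2*pi} F" by simp
  then show ?thesis unfolding L2_T_def F_def[symmetric] by simp
qed

lemma T_main:
  "\<forall>n::nat. n \<ge> 1 \<longrightarrow> (\<exists>C :: nat \<Rightarrow> real. \<forall>l::nat. l \<ge> 1 \<longrightarrow>
      (\<exists>p. schwartz_T p \<and> (\<exists>x. p x \<noteq> 0) \<and> iter_T_defined l n p \<and>
           (\<forall>j\<in>{1..n}. schwartz_T (iter_T l j p)) \<and>
           (\<forall>m::nat. (\<Sum>j\<le>n. Hm_T m (iter_T l j p)) \<le> C m * L2_T p) \<and>
           ((\<forall>j\<le>n. supp_in_T (iter_T l j p)) \<or> (\<forall>j\<le>n. fsupp_in_T (iter_T l j p)))))"
proof (intro allI impI)
  fix n :: nat assume "n \<ge> 1"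
  define N where "N = Suc n"
  define hb where "hb j m = sqrt (\<Sum>k\<le>m. 2 * pi * (cmod (\<i> ^ j) * beta b (N - j) k)\<^sup>2)" for j m
  define C where "C m = (\<Sum>j\<le>n. hb j m) / sqrt (pi/16)" for m
  show "\<exists>C :: nat \<Rightarrow> real. \<forall>l::nat. l \<ge> 1 \<longrightarrow>
      (\<exists>p. schwartz_T p \<and> (\<exists>x. p x \<noteq> 0) \<and> iter_T_defined l n p \<and>
           (\<forall>j\<in>{1..n}. schwartz_T (iter_T l j p)) \<and>
           (\<forall>m::nat. (\<Sum>j\<le>n. Hm_T m (iter_T l j p)) \<le> C m * L2_T p) \<and>
           ((\<forall>j\<le>n. supp_in_T (iter_T l j p)) \<or> (\<forall>j\<le>n. fsupp_in_T (iter_T l j p))))"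
  proof (intro exI[of _ C] allI impI)
    fix l :: nat assume l: "l \<ge> 1"
    have L: "real l \<ge> 1" using l by simp
    define p where "p = (\<lambda>x. B (real l) S N 0 x)"
    have it: "iter_T l j p = (\<lambda>x. \<i> ^ j * B (real l) S (N - j) 0 x)" if "j \<le> n" for j
      using that
    proof (induction j)
      case 0 then show ?case by (simp add: iter_T_def p_def)
    next
      case (Suc j)
      have NS: "N - j = Suc (Suc (n - Suc j))" "N - Suc j = Suc (n - Suc j)" using Suc.prems by (simp_all add: N_def)
      have "iter_T l (Suc j) p = step_T l (iter_T l j p)" by (simp add: iter_T_def)
      also have "\<dots> = step_T l (\<lambda>x. \<i> ^ j * B (real l) S (Suc (Suc (n - Suc j))) 0 x)"
        using Suc by (simp add: NS)
      also have "\<dots> = (\<lambda>x. (\<i> * \<i> ^ j) * B (real l) S (Suc (n - Suc j)) 0 x)"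
        by (rule stepT(1)[of S, OF S per z0 l])
      finally show ?case by (simp add: NS)
    qed
    have defd: "iter_T_defined l n p"
      unfolding iter_T_defined_def
    proof (intro allI impI)
      fix j assume j: "j < n"
      have NS: "N - j = Suc (Suc (n - Suc j))" using j by (simp add: N_def)
      show "inv_dx_T_defined (\<lambda>x. emod l x * iter_T l j p x)"
        unfolding it[OF less_imp_le[OF j]] NS
        by (rule stepT(2)[of S, OF S per z0 l])
    qed
    have sch: "schwartz_T (iter_T l j p)" if "j \<le> n" for j
      unfolding it[OF that] by (rule fT_schwartz)
    have supp: "supp_in_T (iter_T l j p)" if "j \<le> n" for j
      unfolding it[OF that] by (rule fT_supp)
    have Hm: "Hm_T m (iter_T l j p) \<le> hb j m" if "j \<le> n" for j m
      unfolding it[OF that] hb_def by (rule fT_Hm[OF L])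
    have L2: "L2_T p \<ge> sqrt (pi/16)" unfolding p_def by (rule pT_L2)
    have Cnn: "C m \<ge> 0" for m unfolding C_def hb_def by (intro divide_nonneg_pos sum_nonneg real_sqrt_ge_zero) auto
    have bound: "(\<Sum>j\<le>n. Hm_T m (iter_T l j p)) \<le> C m * L2_T p" for m
    proof -
      have "(\<Sum>j\<le>n. Hm_T m (iter_T l j p)) \<le> (\<Sum>j\<le>n. hb j m)"
        by (intro sum_mono Hm) auto
      also have "\<dots> = C m * sqrt (pi/16)" by (simp add: C_def)
      also have "\<dots> \<le> C m * L2_T p" by (intro mult_left_mono L2 Cnn)
      finally show ?thesis .
    qed
    have nz: "p (pi/6) \<noteq> 0"
      unfolding p_def using B_plateau[of S "pi/6" "real l" N 0] pl by simp
    have "schwartz_T p" using sch[of 0] by (simp add: iter_T_def)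
    then show "\<exists>p. schwartz_T p \<and> (\<exists>x. p x \<noteq> 0) \<and> iter_T_defined l n p \<and>
           (\<forall>j\<in>{1..n}. schwartz_T (iter_T l j p)) \<and>
           (\<forall>m::nat. (\<Sum>j\<le>n. Hm_T m (iter_T l j p)) \<le> C m * L2_T p) \<and>
           ((\<forall>j\<le>n. supp_in_T (iter_T l j p)) \<or> (\<forall>j\<le>n. fsupp_in_T (iter_T l j p)))"
      using nz defd sch supp bound by (intro exI[of _ p]) auto
  qed
qed

end


lemma cos_8_16: "cos (pi/8) < cos (pi/16)"
  by (subst cos_mono_less_eq) auto

definition sT :: "real \<Rightarrow> real" where "sT x = Fst (cos (pi/8)) (cos (pi/16)) (cos (x - pi/6))"

lemma Ck_sT: "Ck k sT"
proof -
  have c: "Ck k (\<lambda>x. cos (1 * x + - (pi/6)))"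
    by (rule Ck_comp[OF conjunct2[OF Ck_sin_cos] Ck_affine])
  have "Ck k (\<lambda>x. Fst (cos (pi/8)) (cos (pi/16)) (cos (1 * x + - (pi/6))))"
    by (rule Ck_comp[OF Ck_Fst[OF cos_8_16] c])
  then show ?thesis unfolding sT_def[abs_def] by simp
qed

lemma deriv_per:
  assumes "\<And>x. f (x + 2 * pi) = f x" "\<And>x. f differentiable (at x)"
  shows "deriv f (x + 2 * pi) = deriv f x"
proof -
  have "(f has_real_derivative deriv f (x + 2 * pi)) (at (x + 2 * pi))"
    using assms(2) diff_DERIV by blast
  then have "((\<lambda>y. f (y + 2 * pi)) has_real_derivative deriv f (x + 2 * pi)) (at x)"
    by (simp only: DERIV_shift)
  then have "(f has_real_derivative deriv f (x + 2 * pi)) (at x)" using assms(1) by simp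
  then show ?thesis by (rule DERIV_imp_deriv[symmetric])
qed

lemma T_part:
  "\<forall>n::nat. n \<ge> 1 \<longrightarrow> (\<exists>C :: nat \<Rightarrow> real. \<forall>l::nat. l \<ge> 1 \<longrightarrow>
      (\<exists>p. schwartz_T p \<and> (\<exists>x. p x \<noteq> 0) \<and> iter_T_defined l n p \<and>
           (\<forall>j\<in>{1..n}. schwartz_T (iter_T l j p)) \<and>
           (\<forall>m::nat. (\<Sum>j\<le>n. Hm_T m (iter_T l j p)) \<le> C m * L2_T p) \<and>
           ((\<forall>j\<le>n. supp_in_T (iter_T l j p)) \<or> (\<forall>j\<le>n. fsupp_in_T (iter_T l j p)))))"
proof -
  define S where "S k = (deriv ^^ k) sT" for k
  have Sd: "(S k has_real_derivative S (Suc k) x) (at x)" for k x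
    unfolding S_def by (rule smooth_deriv[OF Ck_sT])
  have per: "S k (x + 2 * pi) = S k x" for k x
  proof (induction k arbitrary: x)
    case 0
    have e: "x + 2*pi - pi/6 = (x - pi/6) + 2*pi" by simp
    have "cos (x + 2*pi - pi/6) = cos (x - pi/6)" unfolding e by (rule cos_periodic)
    then show ?case by (simp only: S_def funpow_0 sT_def)
  next
    case (Suc k)
    have "S (Suc k) = deriv (S k)" by (simp add: S_def)
    moreover have "deriv (S k) (x + 2 * pi) = deriv (S k) x"
      by (rule deriv_per) (use Suc Sd real_differentiable_def in blast)+
    ultimately show ?case by simp
  qed
  have zc: "S k y = 0" if "cos (y - pi/6) < cos (pi/8)" for k y
  proof -
    have "(deriv ^^ k) sT y = (if k = 0 then 0 else 0)"
    proof (rule const_open_derivs[where U="{x. cos (x - pi/6) < cos (pi/8)}"])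
      show "open {x::real. cos (x - pi/6) < cos (pi/8)}"
        by (intro open_Collect_less continuous_intros)
      show "sT x = 0" if "x \<in> {x. cos (x - pi/6) < cos (pi/8)}" for x
        using that by (simp add: sT_def Fst_0)
      show "y \<in> {x. cos (x - pi/6) < cos (pi/8)}" using that by simp
    qed
    then show ?thesis by (simp add: S_def)
  qed
  have pl: "S k y = (if k = 0 then 1 else 0)" if "\<bar>y - pi/6\<bar> \<le> pi/32" for k y
  proof -
    have "(deriv ^^ k) sT y = (if k = 0 then 1 else 0)"
    proof (rule const_open_derivs[where U="{x. cos (x - pi/6) > cos (pi/16)}"])
      show "open {x::real. cos (x - pi/6) > cos (pi/16)}"
        by (intro open_Collect_less continuous_intros)
      show "sT x = 1" if "x \<in> {x. cos (x - pi/6) > cos (pi/16)}" for x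
        using that cos_8_16 by (simp add: sT_def Fst_1)
      have ca: "cos \<bar>a\<bar> = cos a" for a :: real by (cases "a \<ge> 0") auto
      have "cos \<bar>y - pi/6\<bar> = cos (y - pi/6)" by (rule ca)
      moreover have "cos \<bar>y - pi/6\<bar> > cos (pi/16)"
      proof -
        have a0: "0 \<le> \<bar>y - pi/6\<bar>" "\<bar>y - pi/6\<bar> \<le> pi/32" using that by auto
        show ?thesis
        proof (rule cos_mono_less_eq[THEN iffD2])
          show "0 \<le> pi/16" "pi/16 \<le> pi" "0 \<le> \<bar>y - pi/6\<bar>" "\<bar>y - pi/6\<bar> \<le> pi" "\<bar>y - pi/6\<bar> < pi/16"
            using a0 pi_gt_zero by linarith+
        qed
      qed
      ultimately show "y \<in> {x. cos (x - pi/6) > cos (pi/16)}" by simp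
    qed
    then show ?thesis by (simp add: S_def)
  qed
  have "\<exists>c. \<forall>y\<in>{0..2*pi}. \<bar>S k y\<bar> \<le> c" for k
  proof -
    have "continuous_on {0..2*pi} (S k)"
      using DERIV_isCont[OF Sd] by (simp add: continuous_at_imp_continuous_on)
    then have "compact (S k ` {0..2*pi})" by (rule compact_continuous_image) simp
    then obtain c where c: "\<forall>v\<in>S k ` {0..2*pi}. norm v \<le> c"
      using compact_imp_bounded bounded_iff by metis
    then show ?thesis by auto
  qed
  then obtain b where bd: "\<And>k y. y \<in> {0..2*pi} \<Longrightarrow> \<bar>S k y\<bar> \<le> b k" by metis
  show ?thesis by (rule T_main[of S b, OF Sd per zc bd pl])
qed


theorem lemma4p1:
  shows
   "(\<forall>n::nat. n \<ge> 1 \<longrightarrow> (\<exists>C :: nat \<Rightarrow> real. \<forall>l::nat. l \<ge> 1 \<longrightarrow>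
      (\<exists>p. schwartz_T p \<and> (\<exists>x. p x \<noteq> 0) \<and> iter_T_defined l n p \<and>
           (\<forall>j\<in>{1..n}. schwartz_T (iter_T l j p)) \<and>
           (\<forall>m::nat. (\<Sum>j\<le>n. Hm_T m (iter_T l j p)) \<le> C m * L2_T p) \<and>
           ((\<forall>j\<le>n. supp_in_T (iter_T l j p)) \<or> (\<forall>j\<le>n. fsupp_in_T (iter_T l j p))))))
  \<and>
    (\<forall>n::nat. n \<ge> 1 \<longrightarrow> (\<exists>C :: nat \<Rightarrow> real. \<forall>l::nat. l \<ge> 1 \<longrightarrow>
      (\<exists>p. schwartz_R p \<and> (\<exists>x. p x \<noteq> 0) \<and> iter_R_defined l n p \<and>
           (\<forall>j\<in>{1..n}. schwartz_R (iter_R l j p)) \<and>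
           (\<forall>m::nat. (\<Sum>j\<le>n. Hm_R m (iter_R l j p)) \<le> C m * L2_R p) \<and>
           ((\<forall>j\<le>n. supp_in_R (iter_R l j p)) \<or> (\<forall>j\<le>n. fsupp_in_R (iter_R l j p))))))"
    by (rule conjI[OF T_part R_part])

end
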